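(* Let $G=(V,E)$ be a graph, let $V_{cover}\subseteq V$ be a vertex cover of $G$, and let $G'$ be a core subgraph of $G$ formed using $V_{cover}$. If $M'$ is a $(1+\epsilon)$-MCM in $G'$, then $M'$ is also a $(1+\epsilon)$-MCM in $G$.
   Context: A vertex cover is a set of vertices containing at least one endpoint of every edge. Given $G$ and a vertex cover $V_{cover}$, a core subgraph $G'$ consists of: all edges of $G$ with both endpoints in $V_{cover}$; and, for each $v\in V_{cover}$, $|V_{cover}|+1$ edges from $v$ to vertices in $V\setminus V_{cover}$ (all such edges if $v$ has fewer), chosen arbitrarily in an unweighted graph (and of maximum weight in a weighted graph). A matching $M$ of a graph $H$ is a $(1+\epsilon)$-MCM if $|M|\ge\frac{1}{1+\epsilon}$ times the size of a maximum cardinality matching of $H$. *)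

theory Defs
  imports Complex_Main
begin

definition graph :: "'a set \<Rightarrow> 'a set set \<Rightarrow> bool" where
  "graph V E \<longleftrightarrow> finite V \<and> (\<forall>e\<in>E. \<exists>u v. e = {u, v} \<and> u \<noteq> v \<and> u \<in> V \<and> v \<in> V)"

definition matching :: "'a set set \<Rightarrow> 'a set set \<Rightarrow> bool" where
  "matching E M \<longleftrightarrow> M \<subseteq> E \<and> (\<forall>e1\<in>M. \<forall>e2\<in>M. e1 \<noteq> e2 \<longrightarrow> e1 \<inter> e2 = {})"

definition mcm_size :: "'a set set \<Rightarrow> nat" where
  "mcm_size E = Max (card ` {M. matching E M})"

definition approx_mcm :: "real \<Rightarrow> 'a set set \<Rightarrow> 'a set set \<Rightarrow> bool" where
  "approx_mcm eps E M \<longleftrightarrow> matching E M \<and> real (card M) \<ge> real (mcm_size E) / (1 + eps)"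

definition vertex_cover :: "'a set \<Rightarrow> 'a set set \<Rightarrow> 'a set \<Rightarrow> bool" where
  "vertex_cover V E C \<longleftrightarrow> C \<subseteq> V \<and> (\<forall>e\<in>E. e \<inter> C \<noteq> {})"

definition out_edges :: "'a set \<Rightarrow> 'a set set \<Rightarrow> 'a set \<Rightarrow> 'a \<Rightarrow> 'a set set" where
  "out_edges V E C v = {e \<in> E. \<exists>u. e = {v, u} \<and> u \<in> V - C}"

definition core_subgraph :: "'a set \<Rightarrow> 'a set set \<Rightarrow> 'a set \<Rightarrow> 'a set set \<Rightarrow> bool" where
  "core_subgraph V E C E' \<longleftrightarrow>
     (\<exists>S. (\<forall>v\<in>C. S v \<subseteq> out_edges V E C v \<and>
                  card (S v) = min (card (out_edges V E C v)) (card C + 1)) \<and>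
          E' = {e \<in> E. e \<subseteq> C} \<union> (\<Union>v\<in>C. S v))"

end

theory Submission
  imports Defs
begin

lemma graph_edge:
  assumes "graph V E" "e \<in> E"
  shows "\<exists>u v. e = {u, v} \<and> u \<noteq> v \<and> u \<in> V \<and> v \<in> V"
  using assms unfolding graph_def by simp

lemma graph_finV: "graph V E \<Longrightarrow> finite V" unfolding graph_def by simp

lemma graph_E_finite:
  assumes "graph V E" shows "finite E"
proof -
  have "E \<subseteq> Pow V"
  proof
    fix e assume "e \<in> E"
    then obtain u v where "e = {u,v}" "u \<in> V" "v \<in> V" using graph_edge[OF assms] by blast
    thus "e \<in> Pow V" by simp
  qed
  moreover have "finite V" using graph_finV[OF assms] .
  ultimately show ?thesis by (simp add: finite_subset)
qed

lemma matching_finite_set: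
  assumes "finite E" shows "finite {M. matching E M}"
proof -
  have "{M. matching E M} \<subseteq> Pow E" unfolding matching_def by blast
  thus ?thesis using assms by (simp add: finite_subset)
qed

lemma card_le_mcm:
  assumes "finite E" "matching E M" shows "card M \<le> mcm_size E"
proof -
  have "card M \<in> card ` {M. matching E M}" using assms(2) by blast
  thus ?thesis unfolding mcm_size_def
    using Max_ge[OF finite_imageI[OF matching_finite_set[OF assms(1)]]] by blast
qed

lemma mcm_attained:
  assumes "finite E" shows "\<exists>M. matching E M \<and> card M = mcm_size E"
proof -
  have "matching E {}" unfolding matching_def by auto
  hence ne: "card ` {M. matching E M} \<noteq> {}" by blast
  have "mcm_size E \<in> card ` {M. matching E M}"
    unfolding mcm_size_def using Max_in[OF finite_imageI[OF matching_finite_set[OF assms]] ne] .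
  thus ?thesis by auto
qed

lemma exchange_step:
  assumes g: "graph V E" and vc: "vertex_cover V E C"
    and S: "\<forall>v\<in>C. S v \<subseteq> out_edges V E C v \<and>
                  card (S v) = min (card (out_edges V E C v)) (card C + 1)"
    and E': "E' = {e \<in> E. e \<subseteq> C} \<union> (\<Union>v\<in>C. S v)"
    and m: "matching E M" and e: "e \<in> M" "e \<notin> E'"
  shows "\<exists>f. f \<in> E' \<and> f \<in> E \<and> (\<forall>g\<in>M - {e}. f \<inter> g = {}) \<and> matching E (insert f (M - {e}))"
proof -
  have fE: "finite E" using graph_E_finite[OF g] .
  have fV: "finite V" using graph_finV[OF g] .
  have fC: "finite C" using vc fV unfolding vertex_cover_def using finite_subset by blast
  have eE: "e \<in> E" using m e unfolding matching_def by blast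
  obtain a b where ab: "e = {a,b}" "a \<noteq> b" "a \<in> V" "b \<in> V" using graph_edge[OF g eE] by blast
  have "e \<inter> C \<noteq> {}" using vc eE unfolding vertex_cover_def by blast
  have "\<not> e \<subseteq> C" using e(2) eE E' by blast
  then obtain v u where vu: "e = {v,u}" "v \<in> C" "u \<in> V - C"
  proof (cases "a \<in> C")
    case True
    hence "b \<notin> C" using ab(1) \<open>\<not> e \<subseteq> C\<close> by blast
    thus ?thesis using that[of a b] True ab by blast
  next
    case False
    hence "b \<in> C" using ab(1) \<open>e \<inter> C \<noteq> {}\<close> by blast
    thus ?thesis using that[of b a] False ab by (simp add: insert_commute)
  qed
  have eout: "e \<in> out_edges V E C v" unfolding out_edges_def using vu eE by blast
  have fout: "finite (out_edges V E C v)" using fE unfolding out_edges_def by simp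
  have Sv: "S v \<subseteq> out_edges V E C v" "card (S v) = min (card (out_edges V E C v)) (card C + 1)"
    using S vu(2) by auto
  have SvE': "S v \<subseteq> E'" using E' vu(2) by blast
  have cardSv: "card (S v) = card C + 1"
  proof (rule ccontr)
    assume "card (S v) \<noteq> card C + 1"
    hence "card (S v) = card (out_edges V E C v)" using Sv(2) by linarith
    hence "S v = out_edges V E C v" using Sv(1) fout by (simp add: card_subset_eq)
    thus False using eout SvE' e(2) by blast
  qed
  have fSv: "finite (S v)" using Sv(1) fout finite_subset by blast
  let ?M = "M - {e}"
  have "\<exists>f\<in>S v. \<forall>g\<in>?M. f \<inter> g = {}"
  proof (rule ccontr)
    assume "\<not> ?thesis"
    hence hit: "\<forall>f\<in>S v. \<exists>g\<in>?M. f \<inter> g \<noteq> {}" by blast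
    have hit2: "\<forall>f\<in>S v. \<exists>c. \<exists>g\<in>?M. f \<inter> g \<noteq> {} \<and> c \<in> g \<inter> C"
    proof
      fix f assume "f \<in> S v"
      then obtain g where g: "g \<in> ?M" "f \<inter> g \<noteq> {}" using hit by (meson bexE)
      have MsubE: "M \<subseteq> E" using m unfolding matching_def by simp
      have "g \<in> E" using g(1) MsubE by auto
      hence "g \<inter> C \<noteq> {}" using vc unfolding vertex_cover_def by simp
      then obtain c where "c \<in> g \<inter> C" by (meson ex_in_conv)
      thus "\<exists>c. \<exists>g\<in>?M. f \<inter> g \<noteq> {} \<and> c \<in> g \<inter> C" using g by meson
    qed
    define h where "h f = (SOME c. \<exists>g\<in>?M. f \<inter> g \<noteq> {} \<and> c \<in> g \<inter> C)" for f
    have hP: "\<exists>g\<in>?M. f \<inter> g \<noteq> {} \<and> h f \<in> g \<inter> C" if "f \<in> S v" for f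
      unfolding h_def using someI_ex[OF hit2[rule_format, OF that]] .
    have "inj_on h (S v)"
    proof (rule inj_onI)
      fix f1 f2 assume f1: "f1 \<in> S v" and f2: "f2 \<in> S v" and eq: "h f1 = h f2"
      obtain g1 where g1: "g1 \<in> ?M" "f1 \<inter> g1 \<noteq> {}" "h f1 \<in> g1 \<inter> C" using hP[OF f1] by blast
      obtain g2 where g2: "g2 \<in> ?M" "f2 \<inter> g2 \<noteq> {}" "h f2 \<in> g2 \<inter> C" using hP[OF f2] by blast
      have mm: "\<forall>e1\<in>M. \<forall>e2\<in>M. e1 \<noteq> e2 \<longrightarrow> e1 \<inter> e2 = {}" using m unfolding matching_def by blast
      have "h f1 \<in> g1 \<inter> g2" using g1(3) g2(3) eq by simp
      have "g1 = g2"
      proof (rule ccontr)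
        assume ne: "g1 \<noteq> g2"
        have "g1 \<in> M" "g2 \<in> M" using g1(1) g2(1) by simp_all
        hence "g1 \<inter> g2 = {}" using mm ne by simp
        thus False using \<open>h f1 \<in> g1 \<inter> g2\<close> by simp
      qed
      have "g1 \<in> M" "g1 \<noteq> e" using g1(1) by simp_all
      hence "e \<inter> g1 = {}" using mm e(1) by metis
      hence vg: "v \<notin> g1" using vu(1) by auto
      obtain w1 where w1: "f1 = {v,w1}" "w1 \<in> V - C" using f1 Sv(1) unfolding out_edges_def by blast
      obtain w2 where w2: "f2 = {v,w2}" "w2 \<in> V - C" using f2 Sv(1) unfolding out_edges_def by blast
      have "w1 \<in> g1" using g1(2) vg w1(1) by blast
      have "w2 \<in> g1" using g2(2) vg w2(1) \<open>g1 = g2\<close> by blast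
      have "g1 \<in> E" using g1(1) m unfolding matching_def by blast
      then obtain x y where "g1 = {x,y}" using graph_edge[OF g] by blast
      hence "w1 = w2" using \<open>w1 \<in> g1\<close> \<open>w2 \<in> g1\<close> g1(3) w1(2) w2(2) by auto
      thus "f1 = f2" using w1 w2 by simp
    qed
    moreover have "h ` S v \<subseteq> C" using hP by blast
    ultimately have "card (S v) \<le> card C" using fC by (metis card_inj_on_le)
    thus False using cardSv by simp
  qed
  then obtain f where f: "f \<in> S v" "\<forall>g\<in>?M. f \<inter> g = {}" by blast
  have fE': "f \<in> E'" using f SvE' by blast
  have "f \<in> E" using f Sv(1) unfolding out_edges_def by blast
  have "matching E (insert f ?M)"
    using m f(2) \<open>f \<in> E\<close> unfolding matching_def by blast
  thus ?thesis using fE' f(2) \<open>f \<in> E\<close> by blast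
qed

lemma exchange:
  assumes g: "graph V E" and vc: "vertex_cover V E C"
    and S: "\<forall>v\<in>C. S v \<subseteq> out_edges V E C v \<and>
                  card (S v) = min (card (out_edges V E C v)) (card C + 1)"
    and E': "E' = {e \<in> E. e \<subseteq> C} \<union> (\<Union>v\<in>C. S v)"
  shows "matching E M \<Longrightarrow> n = card (M - E') \<Longrightarrow> \<exists>M2. matching E' M2 \<and> card M2 = card M"
proof (induction n arbitrary: M)
  case 0
  have fE: "finite E" using graph_E_finite[OF g] .
  have fM: "finite M" using 0(1) fE unfolding matching_def by (meson finite_subset)
  hence "finite (M - E')" by simp
  hence "M - E' = {}" using 0(2) by simp
  hence "M \<subseteq> E'" by blast
  hence "matching E' M" using 0(1) unfolding matching_def by blast
  thus ?case by blast
next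
  case (Suc n)
  have fE: "finite E" using graph_E_finite[OF g] .
  have fM: "finite M" using Suc(2) fE unfolding matching_def by (meson finite_subset)
  have "M - E' \<noteq> {}" using Suc(3) by (metis card.empty nat.distinct(1))
  then obtain e where "e \<in> M - E'" by (meson ex_in_conv)
  hence e: "e \<in> M" "e \<notin> E'" by simp_all
  obtain f where f: "f \<in> E'" "f \<in> E" "\<forall>g\<in>M - {e}. f \<inter> g = {}" "matching E (insert f (M - {e}))"
    using exchange_step[OF g vc S E' Suc(2) e] by blast
  let ?N = "insert f (M - {e})"
  obtain x y where "f = {x,y}" using graph_edge[OF g f(2)] by blast
  have fnot: "f \<notin> M - {e}"
  proof
    assume "f \<in> M - {e}"
    with f(3) have "f \<inter> f = {}" by (rule bspec)
    thus False using \<open>f = {x,y}\<close> by simp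
  qed
  have fM1: "finite (M - {e})" using fM by simp
  have cN: "card ?N = card M" using card_insert_disjoint[OF fM1 fnot] card_Suc_Diff1[OF fM e(1)] by simp
  have "?N - E' = (M - E') - {e}" using f(1) by blast
  moreover have "finite (M - E')" using fM by simp
  moreover have "e \<in> M - E'" using e by blast
  ultimately have "card (?N - E') = n" using Suc(3) card_Suc_Diff1[of "M - E'" e] by simp
  then obtain M2 where "matching E' M2" "card M2 = card ?N" using Suc(1)[OF f(4)] by metis
  thus ?case using cN by auto
qed

theorem lemma4:
  fixes V C :: "'a set" and E E' M :: "'a set set" and eps :: real
  assumes "graph V E"
    and "vertex_cover V E C"
    and "core_subgraph V E C E'"
    and "eps > 0"
    and "approx_mcm eps E' M"
  shows "approx_mcm eps E M"
proof -
  obtain S where S: "\<forall>v\<in>C. S v \<subseteq> out_edges V E C v \<and>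
                  card (S v) = min (card (out_edges V E C v)) (card C + 1)"
    and E': "E' = {e \<in> E. e \<subseteq> C} \<union> (\<Union>v\<in>C. S v)"
    using assms(3) unfolding core_subgraph_def by blast
  have fE: "finite E" using graph_E_finite[OF assms(1)] .
  have sub: "E' \<subseteq> E" using E' S unfolding out_edges_def by blast
  hence fE': "finite E'" using fE by (meson finite_subset)
  obtain M0 where M0: "matching E M0" "card M0 = mcm_size E" using mcm_attained[OF fE] by blast
  obtain M2 where M2: "matching E' M2" "card M2 = card M0"
    using exchange[OF assms(1,2) S E' M0(1) refl] by blast
  have le: "mcm_size E \<le> mcm_size E'" using card_le_mcm[OF fE' M2(1)] M2 M0 by simp
  have mM: "matching E M" using assms(5) sub unfolding approx_mcm_def matching_def by blast
  have "real (mcm_size E) / (1 + eps) \<le> real (mcm_size E') / (1 + eps)"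
    using le assms(4) by (simp add: divide_right_mono)
  also have "\<dots> \<le> real (card M)" using assms(5) unfolding approx_mcm_def by blast
  finally show ?thesis using mM unfolding approx_mcm_def by blast
qed

end
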